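(* Let $L\subseteq Q$ be an extension of Lie algebras with $L$ semiprime, and suppose $Q$ is an algebra of quotients of $L$. Then $A(Q)$ is a left quotient algebra of $A_0$.
   Context: Algebras are over a commutative unital ring $\Phi$. For a Lie algebra $Q$, $\mathrm{ad}_x(y)=[x,y]$ and $A(Q)$ is the associative subalgebra of $\mathrm{End}_\Phi(Q)$ generated by all $\mathrm{ad}_x$, $x\in Q$. For a Lie subalgebra $L\subseteq Q$, $A_0=\{\mu\in A(Q):\mu(L)\subseteq L\}$. $\mathrm{Ann}_L(X)=\{a\in L:[a,X]=0\}$. $L$ is semiprime if $[I,I]\ne0$ for every nonzero ideal $I$ of $L$. $Q$ is an algebra of quotients of $L$ if for every nonzero $q\in Q$ there is an ideal $I$ of $L$ with $\mathrm{Ann}_L(I)=0$ and $0\neq[I,q]\subseteq L$. An associative algebra $S$ is a left quotient algebra of a subalgebra $A$ if for all $p,q\in S$ with $p\ne0$ there exists $x\in A$ with $xp\neq0$ and $xq\in A$. *)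

theory Defs
  imports Main "HOL.Modules"
begin

text \<open>A Lie algebra over a commutative unital ring: the carrier is the whole type 'q,
  a module (via scalar action s) with a bilinear alternating bracket satisfying Jacobi.\<close>

definition lie_algebra ::
  "('r::comm_ring_1 \<Rightarrow> 'q::ab_group_add \<Rightarrow> 'q) \<Rightarrow> ('q \<Rightarrow> 'q \<Rightarrow> 'q) \<Rightarrow> bool" where
  "lie_algebra s br \<longleftrightarrow> module s
     \<and> (\<forall>x y z. br (x + y) z = br x z + br y z)
     \<and> (\<forall>x y z. br x (y + z) = br x y + br x z)
     \<and> (\<forall>r x y. br (s r x) y = s r (br x y))
     \<and> (\<forall>r x y. br x (s r y) = s r (br x y))
     \<and> (\<forall>x. br x x = 0)
     \<and> (\<forall>x y z. br x (br y z) + br y (br z x) + br z (br x y) = 0)"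

definition lie_subalgebra ::
  "('r::comm_ring_1 \<Rightarrow> 'q::ab_group_add \<Rightarrow> 'q) \<Rightarrow> ('q \<Rightarrow> 'q \<Rightarrow> 'q) \<Rightarrow> 'q set \<Rightarrow> bool" where
  "lie_subalgebra s br L \<longleftrightarrow> module.subspace s L \<and> (\<forall>x\<in>L. \<forall>y\<in>L. br x y \<in> L)"

definition lie_ideal ::
  "('r::comm_ring_1 \<Rightarrow> 'q::ab_group_add \<Rightarrow> 'q) \<Rightarrow> ('q \<Rightarrow> 'q \<Rightarrow> 'q) \<Rightarrow> 'q set \<Rightarrow> 'q set \<Rightarrow> bool" where
  "lie_ideal s br L I \<longleftrightarrow> module.subspace s I \<and> I \<subseteq> L \<and> (\<forall>x\<in>I. \<forall>y\<in>L. br x y \<in> I)"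

text \<open>[I,I] (the span of brackets) is nonzero iff some bracket of elements of I is nonzero.\<close>
definition semiprime ::
  "('r::comm_ring_1 \<Rightarrow> 'q::ab_group_add \<Rightarrow> 'q) \<Rightarrow> ('q \<Rightarrow> 'q \<Rightarrow> 'q) \<Rightarrow> 'q set \<Rightarrow> bool" where
  "semiprime s br L \<longleftrightarrow>
     (\<forall>I. lie_ideal s br L I \<and> I \<noteq> {0} \<longrightarrow> (\<exists>a\<in>I. \<exists>b\<in>I. br a b \<noteq> 0))"

definition Ann :: "('q \<Rightarrow> 'q \<Rightarrow> 'q::zero) \<Rightarrow> 'q set \<Rightarrow> 'q set \<Rightarrow> 'q set" where
  "Ann br L X = {a \<in> L. \<forall>x\<in>X. br a x = 0}"

definition algebra_of_quotients ::
  "('r::comm_ring_1 \<Rightarrow> 'q::ab_group_add \<Rightarrow> 'q) \<Rightarrow> ('q \<Rightarrow> 'q \<Rightarrow> 'q) \<Rightarrow> 'q set \<Rightarrow> bool" where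
  "algebra_of_quotients s br L \<longleftrightarrow>
     (\<forall>q. q \<noteq> 0 \<longrightarrow> (\<exists>I. lie_ideal s br L I \<and> Ann br L I = {0}
        \<and> (\<exists>x\<in>I. br x q \<noteq> 0) \<and> (\<forall>x\<in>I. br x q \<in> L)))"

definition ad :: "('q \<Rightarrow> 'q \<Rightarrow> 'q) \<Rightarrow> 'q \<Rightarrow> 'q \<Rightarrow> 'q" where
  "ad br x = (\<lambda>y. br x y)"

text \<open>A(Q): the associative Phi-subalgebra of End(Q) generated by all ad x.\<close>
inductive_set assocA ::
  "('r::comm_ring_1 \<Rightarrow> 'q::ab_group_add \<Rightarrow> 'q) \<Rightarrow> ('q \<Rightarrow> 'q \<Rightarrow> 'q) \<Rightarrow> ('q \<Rightarrow> 'q) set"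
  for s br where
  gen: "ad br x \<in> assocA s br"
| zero: "(\<lambda>_. 0) \<in> assocA s br"
| add: "f \<in> assocA s br \<Longrightarrow> g \<in> assocA s br \<Longrightarrow> (\<lambda>v. f v + g v) \<in> assocA s br"
| scal: "f \<in> assocA s br \<Longrightarrow> (\<lambda>v. s r (f v)) \<in> assocA s br"
| comp: "f \<in> assocA s br \<Longrightarrow> g \<in> assocA s br \<Longrightarrow> f \<circ> g \<in> assocA s br"

definition A0 ::
  "('r::comm_ring_1 \<Rightarrow> 'q::ab_group_add \<Rightarrow> 'q) \<Rightarrow> ('q \<Rightarrow> 'q \<Rightarrow> 'q) \<Rightarrow> 'q set \<Rightarrow> ('q \<Rightarrow> 'q) set" where
  "A0 s br L = {\<mu> \<in> assocA s br. \<mu> ` L \<subseteq> L}"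

text \<open>S is a left quotient algebra of its subalgebra A (multiplication = composition).\<close>
definition left_quotient_algebra :: "('q \<Rightarrow> 'q::zero) set \<Rightarrow> ('q \<Rightarrow> 'q) set \<Rightarrow> bool" where
  "left_quotient_algebra S A \<longleftrightarrow>
     (\<forall>p\<in>S. \<forall>q\<in>S. p \<noteq> (\<lambda>_. 0) \<longrightarrow> (\<exists>x\<in>A. x \<circ> p \<noteq> (\<lambda>_. 0) \<and> x \<circ> q \<in> A))"

end

theory Submission
  imports Defs
begin

primrec Sset :: "('q \<Rightarrow> 'q \<Rightarrow> 'q) \<Rightarrow> 'q set \<Rightarrow> 'q set \<Rightarrow> nat \<Rightarrow> 'q set" where
  "Sset br L J 0 = L"
| "Sset br L J (Suc n) = {v. \<forall>a\<in>J. br a v \<in> Sset br L J n}"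

context
  fixes s :: "'r::comm_ring_1 \<Rightarrow> 'q::ab_group_add \<Rightarrow> 'q"
    and br :: "'q \<Rightarrow> 'q \<Rightarrow> 'q"
    and L :: "'q set"
  assumes lie: "lie_algebra s br"
    and sub: "lie_subalgebra s br L"
begin

lemma md: "module s" using lie unfolding lie_algebra_def by blast
lemma addl: "br (x + y) z = br x z + br y z" using lie unfolding lie_algebra_def by blast
lemma addr: "br x (y + z) = br x y + br x z" using lie unfolding lie_algebra_def by blast
lemma scl: "br (s r x) y = s r (br x y)" using lie unfolding lie_algebra_def by blast
lemma scr: "br x (s r y) = s r (br x y)" using lie unfolding lie_algebra_def by blast
lemma alt: "br x x = 0" using lie unfolding lie_algebra_def by blast
lemma jac: "br x (br y z) + br y (br z x) + br z (br x y) = 0" using lie unfolding lie_algebra_def by blast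

lemma br0l[simp]: "br 0 x = 0"
proof -
  have "br (0+0) x = br 0 x + br 0 x" by (rule addl)
  then show ?thesis by simp
qed

lemma br0r[simp]: "br x 0 = 0"
proof -
  have "br x (0+0) = br x 0 + br x 0" by (rule addr)
  then show ?thesis by simp
qed

lemma anti: "br x y = - br y x"
proof -
  have "br (x+y) (x+y) = 0" by (rule alt)
  then have "br x x + br y x + (br x y + br y y) = 0" by (simp add: addl addr)
  then have "br y x + br x y = 0" by (simp add: alt)
  then show ?thesis by (simp add: eq_neg_iff_add_eq_0 add.commute)
qed

lemma jac2: "br a (br b v) = br (br a b) v + br b (br a v)"
proof -
  have "br a (br b v) + br b (br v a) + br v (br a b) = 0" by (rule jac)
  moreover have "br b (br v a) = - br b (br a v)" by (metis anti br0r add.right_inverse addr add_right_cancel add.commute add_0)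
  moreover have "br v (br a b) = - br (br a b) v" by (rule anti)
  ultimately show ?thesis by (simp add: algebra_simps)
qed

lemma Lsub: "module.subspace s L" using sub unfolding lie_subalgebra_def by blast
lemma Lbr: "x \<in> L \<Longrightarrow> y \<in> L \<Longrightarrow> br x y \<in> L" using sub unfolding lie_subalgebra_def by blast
lemma L0: "0 \<in> L" using module.subspace_0[OF md Lsub] .
lemma Ladd: "x \<in> L \<Longrightarrow> y \<in> L \<Longrightarrow> x + y \<in> L" using module.subspace_add[OF md Lsub] .
lemma Lscale: "x \<in> L \<Longrightarrow> s r x \<in> L" using module.subspace_scale[OF md Lsub] .
lemma Lneg: "x \<in> L \<Longrightarrow> - x \<in> L" using module.subspace_neg[OF md Lsub] .

lemma idealD:
  assumes "lie_ideal s br L I"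
  shows "module.subspace s I" "I \<subseteq> L" "\<And>x y. x \<in> I \<Longrightarrow> y \<in> L \<Longrightarrow> br x y \<in> I"
    "\<And>x y. x \<in> I \<Longrightarrow> y \<in> L \<Longrightarrow> br y x \<in> I"
proof -
  show 1: "module.subspace s I" "I \<subseteq> L" using assms unfolding lie_ideal_def by blast+
  show 3: "\<And>x y. x \<in> I \<Longrightarrow> y \<in> L \<Longrightarrow> br x y \<in> I" using assms unfolding lie_ideal_def by blast
  fix x y assume "x \<in> I" "y \<in> L"
  then have "- br x y \<in> I" using module.subspace_neg[OF md 1(1)] 3 by blast
  then show "br y x \<in> I" using anti[of y x] by simp
qed

lemma ideal_L: "lie_ideal s br L L"
  unfolding lie_ideal_def using Lsub Lbr by blast

lemma ideal_Int:
  assumes "lie_ideal s br L I1" "lie_ideal s br L I2"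
  shows "lie_ideal s br L (I1 \<inter> I2)"
proof -
  have "module.subspace s (I1 \<inter> I2)" using module.subspace_inter[OF md] idealD(1)[OF assms(1)] idealD(1)[OF assms(2)] by blast
  then show ?thesis unfolding lie_ideal_def using idealD(2,3)[OF assms(1)] idealD(3)[OF assms(2)] by blast
qed


context
  fixes J assumes J: "lie_ideal s br L J"
begin

lemma S0: "0 \<in> Sset br L J n"
  by (induction n) (auto simp: L0)

lemma Sadd: "x \<in> Sset br L J n \<Longrightarrow> y \<in> Sset br L J n \<Longrightarrow> x + y \<in> Sset br L J n"
  by (induction n arbitrary: x y) (auto simp: Ladd addr)

lemma Sscale: "x \<in> Sset br L J n \<Longrightarrow> s r x \<in> Sset br L J n"
  by (induction n arbitrary: x) (auto simp: Lscale scr)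

lemma Ssuc: "x \<in> Sset br L J n \<Longrightarrow> x \<in> Sset br L J (Suc n)"
proof (induction n arbitrary: x)
  case 0
  then show ?case using idealD(2)[OF J] by (auto intro: Lbr)
next
  case (Suc n)
  then show ?case by auto
qed

lemma Smono: "m \<le> n \<Longrightarrow> x \<in> Sset br L J m \<Longrightarrow> x \<in> Sset br L J n"
proof (induction n)
  case 0 then show ?case by simp
next
  case (Suc n)
  then show ?case using Ssuc by (cases "m = Suc n") auto
qed

lemma SbrL: "b \<in> L \<Longrightarrow> v \<in> Sset br L J n \<Longrightarrow> br b v \<in> Sset br L J n"
proof (induction n arbitrary: b v)
  case 0 then show ?case by (auto intro: Lbr)
next
  case (Suc n)
  show ?case
  proof (simp, intro ballI)
    fix a assume a: "a \<in> J"
    have "br a (br b v) = br (br a b) v + br b (br a v)" by (rule jac2)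
    moreover have "br (br a b) v \<in> Sset br L J n"
      using Suc.prems idealD(3)[OF J a Suc.prems(1)] by auto
    moreover have "br b (br a v) \<in> Sset br L J n"
      using Suc a by auto
    ultimately show "br a (br b v) \<in> Sset br L J n" using Sadd by simp
  qed
qed

lemma Sc:
  assumes c: "\<forall>a\<in>J. br a c \<in> L"
  shows "v \<in> Sset br L J n \<Longrightarrow> br c v \<in> Sset br L J (Suc n)"
proof (induction n arbitrary: v)
  case 0
  show ?case
  proof (simp, intro ballI)
    fix a assume a: "a \<in> J"
    have "br a (br c v) = br (br a c) v + br c (br a v)" by (rule jac2)
    moreover have "br (br a c) v \<in> L" using c a 0 by (auto intro: Lbr)
    moreover have "br c (br a v) \<in> L"
    proof -
      have "br a v \<in> J" using idealD(3)[OF J a] 0 by simp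
      then have "br (br a v) c \<in> L" using c by blast
      then show ?thesis by (metis anti Lneg)
    qed
    ultimately show "br a (br c v) \<in> L" by (simp add: Ladd)
  qed
next
  case (Suc n)
  show ?case
  unfolding Sset.simps(2)[of br L J "Suc n"] mem_Collect_eq
  proof (intro ballI)
    fix a assume a: "a \<in> J"
    have "br a (br c v) = br (br a c) v + br c (br a v)" by (rule jac2)
    moreover have "br (br a c) v \<in> Sset br L J (Suc n)"
      using SbrL c a Suc.prems by blast
    moreover have "br c (br a v) \<in> Sset br L J (Suc n)"
      using Suc a by auto
    ultimately show "br a (br c v) \<in> Sset br L J (Suc n)" by (metis Sadd)
  qed
qed

end



lemma Ann_closed:
  assumes I: "lie_ideal s br L I" and x: "x \<in> Ann br L I" and y: "y \<in> L"
  shows "br x y \<in> Ann br L I"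
proof -
  have xL: "x \<in> L" using x unfolding Ann_def by blast
  have "br (br x y) z = 0" if z: "z \<in> I" for z
  proof -
    have "br x (br y z) = br (br x y) z + br y (br x z)" by (rule jac2)
    moreover have "br y z \<in> I" using idealD(4)[OF I z y] .
    then have "br x (br y z) = 0" using x unfolding Ann_def by blast
    moreover have "br x z = 0" using x z unfolding Ann_def by blast
    ultimately show ?thesis by simp
  qed
  then show ?thesis unfolding Ann_def using Lbr[OF xL y] by blast
qed

lemma Ann0: "0 \<in> Ann br L I" unfolding Ann_def using L0 by simp

lemma ann_cap_zero:
  assumes sp: "semiprime s br L" and I: "lie_ideal s br L I"
  shows "Ann br L I \<inter> I = {0}"
proof -
  let ?M = "Ann br L I \<inter> I"
  have subM: "module.subspace s ?M"
  proof (rule module.subspaceI[OF md])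
    show "0 \<in> ?M" using Ann0 module.subspace_0[OF md idealD(1)[OF I]] by blast
  next
    fix x y assume "x \<in> ?M" "y \<in> ?M"
    then show "x + y \<in> ?M" unfolding Ann_def
      using Ladd addl module.subspace_add[OF md idealD(1)[OF I]] by auto
  next
    fix c x assume "x \<in> ?M"
    then show "s c x \<in> ?M" unfolding Ann_def
      using Lscale scl module.subspace_scale[OF md idealD(1)[OF I]] module.scale_zero_right[OF md] by auto
  qed
  have "lie_ideal s br L ?M"
    unfolding lie_ideal_def
  proof (intro conjI ballI)
    show "?M \<subseteq> L" unfolding Ann_def by blast
  next
    fix x y assume "x \<in> ?M" "y \<in> L"
    then show "br x y \<in> ?M" using Ann_closed[OF I] idealD(3)[OF I] by blast
  qed (rule subM)
  moreover have "\<not> (\<exists>a\<in>?M. \<exists>b\<in>?M. br a b \<noteq> 0)" unfolding Ann_def by blast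
  ultimately have "\<not> ?M \<noteq> {0}" using sp unfolding semiprime_def by blast
  then show ?thesis by blast
qed

lemma AnnL: "semiprime s br L \<Longrightarrow> Ann br L L = {0}"
  using ann_cap_zero[OF _ ideal_L] unfolding Ann_def by blast

lemma ess_Int:
  assumes sp: "semiprime s br L" and I1: "lie_ideal s br L I1" and I2: "lie_ideal s br L I2"
    and A1: "Ann br L I1 = {0}" and A2: "Ann br L I2 = {0}"
  shows "Ann br L (I1 \<inter> I2) = {0}"
proof -
  let ?K = "I1 \<inter> I2"
  have K: "lie_ideal s br L ?K" by (rule ideal_Int[OF I1 I2])
  have "x = 0" if x: "x \<in> Ann br L ?K" for x
  proof -
    have xL: "x \<in> L" using x unfolding Ann_def by blast
    have "br x a = 0" if a: "a \<in> I1" for a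
    proof -
      have aL: "a \<in> L" using a idealD(2)[OF I1] by blast
      have xa1: "br x a \<in> I1" using idealD(4)[OF I1 a xL] .
      have xaL: "br x a \<in> L" using xa1 idealD(2)[OF I1] by blast
      have xaA: "br x a \<in> Ann br L ?K" using Ann_closed[OF K x aL] .
      have "br (br x a) b = 0" if b: "b \<in> I2" for b
      proof -
        have bL: "b \<in> L" using b idealD(2)[OF I2] by blast
        have "br (br x a) b \<in> ?K" using idealD(3)[OF I1 xa1 bL] idealD(4)[OF I2 b xaL] by blast
        moreover have "br (br x a) b \<in> Ann br L ?K" using Ann_closed[OF K xaA bL] .
        ultimately show ?thesis using ann_cap_zero[OF sp K] by blast
      qed
      then have "br x a \<in> Ann br L I2" unfolding Ann_def using xaL by blast
      then show ?thesis using A2 by blast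
    qed
    then have "x \<in> Ann br L I1" unfolding Ann_def using xL by blast
    then show ?thesis using A1 by blast
  qed
  then show ?thesis using Ann0 by blast
qed

lemma lemA:
  assumes aoq: "algebra_of_quotients s br L" and J: "lie_ideal s br L J"
    and AJ: "Ann br L J = {0}" and u: "u \<noteq> 0"
  shows "\<exists>a\<in>J. br a u \<noteq> 0"
proof (rule ccontr)
  assume H: "\<not> (\<exists>a\<in>J. br a u \<noteq> 0)"
  obtain I where I: "lie_ideal s br L I" and b: "\<exists>x\<in>I. br x u \<noteq> 0" and IL: "\<forall>x\<in>I. br x u \<in> L"
    using aoq u unfolding algebra_of_quotients_def by blast
  obtain b where bI: "b \<in> I" and bu: "br b u \<noteq> 0" using b by blast
  have bL: "b \<in> L" using bI idealD(2)[OF I] by blast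
  have "br (br b u) a = 0" if a: "a \<in> J" for a
  proof -
    have "br a (br b u) = br (br a b) u + br b (br a u)" by (rule jac2)
    moreover have "br a u = 0" using H a by blast
    moreover have "br (br a b) u = 0" using H idealD(3)[OF J a bL] by blast
    ultimately have "br a (br b u) = 0" by simp
    then show ?thesis by (metis anti neg_equal_0_iff_equal)
  qed
  then have "br b u \<in> Ann br L J" unfolding Ann_def using IL bI by blast
  then show False using AJ bu by blast
qed

lemma claim:
  assumes sp: "semiprime s br L" and aoq: "algebra_of_quotients s br L"
    and mu: "\<mu> \<in> assocA s br"
  shows "\<exists>I. lie_ideal s br L I \<and> Ann br L I = {0} \<and> (\<exists>k. \<forall>J j v. lie_ideal s br L J \<longrightarrow> J \<subseteq> I
           \<longrightarrow> v \<in> Sset br L J j \<longrightarrow> \<mu> v \<in> Sset br L J (j+k))"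
  using mu
proof (induction rule: assocA.induct)
  case (gen x)
  show ?case
  proof (cases "x = 0")
    case True
    then show ?thesis using ideal_L AnnL[OF sp] S0 unfolding ad_def by auto
  next
    case False
    then obtain I where I: "lie_ideal s br L I" "Ann br L I = {0}" "\<forall>a\<in>I. br a x \<in> L"
      using aoq unfolding algebra_of_quotients_def by blast
    have "\<forall>J j v. lie_ideal s br L J \<longrightarrow> J \<subseteq> I
           \<longrightarrow> v \<in> Sset br L J j \<longrightarrow> ad br x v \<in> Sset br L J (j+1)"
      using Sc I(3) unfolding ad_def by (metis Suc_eq_plus1 subsetD)
    then show ?thesis using I by blast
  qed
next
  case zero
  then show ?case using ideal_L AnnL[OF sp] S0 by auto
next
  case (add f g)
  then obtain I1 k1 I2 k2 where I1: "lie_ideal s br L I1" "Ann br L I1 = {0}"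
    "\<forall>J j v. lie_ideal s br L J \<longrightarrow> J \<subseteq> I1 \<longrightarrow> v \<in> Sset br L J j \<longrightarrow> f v \<in> Sset br L J (j+k1)"
    and I2: "lie_ideal s br L I2" "Ann br L I2 = {0}"
    "\<forall>J j v. lie_ideal s br L J \<longrightarrow> J \<subseteq> I2 \<longrightarrow> v \<in> Sset br L J j \<longrightarrow> g v \<in> Sset br L J (j+k2)"
    by blast
  have "\<forall>J j v. lie_ideal s br L J \<longrightarrow> J \<subseteq> I1 \<inter> I2 \<longrightarrow> v \<in> Sset br L J j \<longrightarrow> f v + g v \<in> Sset br L J (j+(k1+k2))"
  proof (intro allI impI)
    fix J j v assume J: "lie_ideal s br L J" "J \<subseteq> I1 \<inter> I2" "v \<in> Sset br L J j"
    have "f v \<in> Sset br L J (j+(k1+k2))" using I1(3) J Smono[OF J(1), of "j+k1"] by auto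
    moreover have "g v \<in> Sset br L J (j+(k1+k2))" using I2(3) J Smono[OF J(1), of "j+k2"] by auto
    ultimately show "f v + g v \<in> Sset br L J (j+(k1+k2))" using Sadd[OF J(1)] by blast
  qed
  then show ?case using ideal_Int[OF I1(1) I2(1)] ess_Int[OF sp I1(1) I2(1) I1(2) I2(2)] by blast
next
  case (scal f r)
  then obtain I k where I: "lie_ideal s br L I" "Ann br L I = {0}"
    "\<forall>J j v. lie_ideal s br L J \<longrightarrow> J \<subseteq> I \<longrightarrow> v \<in> Sset br L J j \<longrightarrow> f v \<in> Sset br L J (j+k)"
    by blast
  then show ?case using Sscale by blast
next
  case (comp f g)
  then obtain I1 k1 I2 k2 where I1: "lie_ideal s br L I1" "Ann br L I1 = {0}"
    "\<forall>J j v. lie_ideal s br L J \<longrightarrow> J \<subseteq> I1 \<longrightarrow> v \<in> Sset br L J j \<longrightarrow> f v \<in> Sset br L J (j+k1)"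
    and I2: "lie_ideal s br L I2" "Ann br L I2 = {0}"
    "\<forall>J j v. lie_ideal s br L J \<longrightarrow> J \<subseteq> I2 \<longrightarrow> v \<in> Sset br L J j \<longrightarrow> g v \<in> Sset br L J (j+k2)"
    by blast
  have "\<forall>J j v. lie_ideal s br L J \<longrightarrow> J \<subseteq> I1 \<inter> I2 \<longrightarrow> v \<in> Sset br L J j \<longrightarrow> (f \<circ> g) v \<in> Sset br L J (j+(k2+k1))"
  proof (intro allI impI)
    fix J j v assume J: "lie_ideal s br L J" "J \<subseteq> I1 \<inter> I2" "v \<in> Sset br L J j"
    have "g v \<in> Sset br L J (j+k2)" using I2(3) J by auto
    then have "f (g v) \<in> Sset br L J (j+k2+k1)" using I1(3) J by auto
    then show "(f \<circ> g) v \<in> Sset br L J (j+(k2+k1))" by (simp add: add.assoc)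
  qed
  then show ?case using ideal_Int[OF I1(1) I2(1)] ess_Int[OF sp I1(1) I2(1) I1(2) I2(2)] by blast
qed

lemma words:
  assumes aoq: "algebra_of_quotients s br L" and I: "lie_ideal s br L I"
    and AI: "Ann br L I = {0}"
  shows "\<forall>u. u \<noteq> 0 \<longrightarrow> (\<exists>x\<in>assocA s br. x ` L \<subseteq> L \<and> x u \<noteq> 0 \<and> (\<forall>w\<in>Sset br L I (Suc n). x w \<in> L))"
proof (induction n)
  case 0
  show ?case
  proof (intro allI impI)
    fix u :: 'q assume u: "u \<noteq> 0"
    obtain a where a: "a \<in> I" "br a u \<noteq> 0" using lemA[OF aoq I AI u] by blast
    have aL: "a \<in> L" using a idealD(2)[OF I] by blast
    show "\<exists>x\<in>assocA s br. x ` L \<subseteq> L \<and> x u \<noteq> 0 \<and> (\<forall>w\<in>Sset br L I (Suc 0). x w \<in> L)"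
      apply (rule bexI[of _ "ad br a"])
      using a aL Lbr apply (auto simp: ad_def)[1]
      by (rule assocA.gen)
  qed
next
  case (Suc n)
  show ?case
  proof (intro allI impI)
    fix u :: 'q assume u: "u \<noteq> 0"
    obtain a where a: "a \<in> I" "br a u \<noteq> 0" using lemA[OF aoq I AI u] by blast
    have aL: "a \<in> L" using a idealD(2)[OF I] by blast
    obtain x where x: "x \<in> assocA s br" "x ` L \<subseteq> L" "x (br a u) \<noteq> 0"
      "\<forall>w\<in>Sset br L I (Suc n). x w \<in> L" using Suc a by blast
    show "\<exists>x\<in>assocA s br. x ` L \<subseteq> L \<and> x u \<noteq> 0 \<and> (\<forall>w\<in>Sset br L I (Suc (Suc n)). x w \<in> L)"
      apply (rule bexI[of _ "x \<circ> ad br a"])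
      using x a aL Lbr apply (auto simp: ad_def)[1]
      by (rule assocA.comp[OF x(1) assocA.gen])
  qed
qed

end

theorem mainTheorem2:
  fixes s :: "'r::comm_ring_1 \<Rightarrow> 'q::ab_group_add \<Rightarrow> 'q"
    and br :: "'q \<Rightarrow> 'q \<Rightarrow> 'q"
    and L :: "'q set"
  assumes "lie_algebra s br"
    and "lie_subalgebra s br L"
    and "semiprime s br L"
    and "algebra_of_quotients s br L"
  shows "left_quotient_algebra (assocA s br) (A0 s br L)"
  unfolding left_quotient_algebra_def
proof (intro ballI impI)
  fix p q assume p: "p \<in> assocA s br" and q: "q \<in> assocA s br" and p0: "p \<noteq> (\<lambda>_. 0)"
  obtain v where v: "p v \<noteq> 0" using p0 by blast
  obtain I k where I: "lie_ideal s br L I" "Ann br L I = {0}"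
    "\<forall>J j v. lie_ideal s br L J \<longrightarrow> J \<subseteq> I \<longrightarrow> v \<in> Sset br L J j \<longrightarrow> q v \<in> Sset br L J (j+k)"
    using claim[OF assms(1,2,3,4) q] by blast
  obtain x where x: "x \<in> assocA s br" "x ` L \<subseteq> L" "x (p v) \<noteq> 0"
      "\<forall>w\<in>Sset br L I (Suc k). x w \<in> L"
    using words[OF assms(1,2,4) I(1,2), of k] v by blast
  have "(x \<circ> q) ` L \<subseteq> L"
  proof
    fix z assume "z \<in> (x \<circ> q) ` L"
    then obtain y where y: "y \<in> L" "z = x (q y)" by auto
    have "q y \<in> Sset br L I (0+k)" using I(3) I(1) y by (metis Sset.simps(1) subset_refl)
    then have "q y \<in> Sset br L I (Suc k)" using Ssuc[OF assms(1,2) I(1)] by simp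
    then show "z \<in> L" using x(4) y by blast
  qed
  then have "x \<circ> q \<in> A0 s br L" unfolding A0_def using x(1) q by (auto intro: assocA.comp)
  moreover have "x \<in> A0 s br L" unfolding A0_def using x by blast
  moreover have "x \<circ> p \<noteq> (\<lambda>_. 0)" using x(3) by (metis comp_apply)
  ultimately show "\<exists>x\<in>A0 s br L. x \<circ> p \<noteq> (\<lambda>_. 0) \<and> x \<circ> q \<in> A0 s br L" by blast
qed

end
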